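(* Let $d\ge2$, $\mathcal{X}=\{0,\dots,d-1\}$, and let $P_{XABC}$ be a probability distribution on $\mathcal{X}\times\{0,1\}^3$. Define $\omega_{\mathrm{c}}=\max_{f,g,h}\sum_{x,a,b,c}P_{XABC}(x,a,b,c)\,\delta[f(a)=g(b)=h(c)=x]$, maximized over functions $f,g,h\colon\{0,1\}\to\mathcal{X}$. Then $$\omega_{\mathrm{c}}=\max_{s,t\in\mathcal{X},\,s\ne t}\max\left\{\begin{matrix}P_X(s),\\ P_{XABC}(s,0,0,0)+P_{XABC}(t,1,1,1),\\ P_{XABC}(s,1,0,0)+P_{XABC}(t,0,1,1),\\ P_{XABC}(s,0,1,0)+P_{XABC}(t,1,0,1),\\ P_{XABC}(s,0,0,1)+P_{XABC}(t,1,1,0)\end{matrix}\right\}.$$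
   Context: $\delta$ is the indicator function; $P_X$ is the marginal of $P_{XABC}$ on $\mathcal{X}$. $\omega_{\mathrm{c}}$ is the optimal classical winning probability of the three-player LSSD game in which a referee samples $(x,a,b,c)\sim P_{XABC}$, sends $a,b,c$ to three non-communicating players, who win iff all three output $x$. *)

theory Defs
  imports "HOL-Analysis.Analysis"
begin

text \<open>Bits in {0,1} are encoded as bool (False = 0, True = 1).
 A distribution P_XABC on {0..d-1} x {0,1}^3 is a function
 P :: nat => bool => bool => bool => real.\<close>

definition is_distr :: "nat \<Rightarrow> (nat \<Rightarrow> bool \<Rightarrow> bool \<Rightarrow> bool \<Rightarrow> real) \<Rightarrow> bool" where
  "is_distr d P \<longleftrightarrow>
     (\<forall>x a b c. 0 \<le> P x a b c) \<and>
     (\<forall>x a b c. x \<ge> d \<longrightarrow> P x a b c = 0) \<and>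
     (\<Sum>x<d. \<Sum>a\<in>UNIV. \<Sum>b\<in>UNIV. \<Sum>c\<in>UNIV. P x a b c) = 1"

definition marg_X :: "(nat \<Rightarrow> bool \<Rightarrow> bool \<Rightarrow> bool \<Rightarrow> real) \<Rightarrow> nat \<Rightarrow> real" where
  "marg_X P x = (\<Sum>a\<in>UNIV. \<Sum>b\<in>UNIV. \<Sum>c\<in>UNIV. P x a b c)"

definition win_prob :: "nat \<Rightarrow> (nat \<Rightarrow> bool \<Rightarrow> bool \<Rightarrow> bool \<Rightarrow> real)
    \<Rightarrow> (bool \<Rightarrow> nat) \<Rightarrow> (bool \<Rightarrow> nat) \<Rightarrow> (bool \<Rightarrow> nat) \<Rightarrow> real" where
  "win_prob d P f g h = (\<Sum>x<d. \<Sum>a\<in>UNIV. \<Sum>b\<in>UNIV. \<Sum>c\<in>UNIV.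
      P x a b c * (if f a = x \<and> g b = x \<and> h c = x then 1 else 0))"

definition strat_funs :: "nat \<Rightarrow> (bool \<Rightarrow> nat) set" where
  "strat_funs d = {f. \<forall>a. f a < d}"

definition omega_c :: "nat \<Rightarrow> (nat \<Rightarrow> bool \<Rightarrow> bool \<Rightarrow> bool \<Rightarrow> real) \<Rightarrow> real" where
  "omega_c d P = Max {win_prob d P f g h | f g h.
      f \<in> strat_funs d \<and> g \<in> strat_funs d \<and> h \<in> strat_funs d}"

end

theory Submission
  imports Defs
begin

lemma inner_L:
  assumes "f a < (d::nat)"
  shows "(\<Sum>x<d. P x a b c * (if f a = x \<and> g b = x \<and> h c = x then 1 else 0)) =
         (if f a = g b \<and> g b = h c then P (f a) a b c else (0::real))"
proof -
  have "(\<Sum>x<d. P x a b c * (if f a = x \<and> g b = x \<and> h c = x then 1 else 0)) =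
        (\<Sum>x<d. if f a = x then (if f a = g b \<and> g b = h c then P (f a) a b c else 0) else 0)"
    by (rule sum.cong) auto
  also have "\<dots> = (if f a = g b \<and> g b = h c then P (f a) a b c else 0)"
    using assms by (simp add: sum.delta')
  finally show ?thesis .
qed

definition W :: "(nat \<Rightarrow> bool \<Rightarrow> bool \<Rightarrow> bool \<Rightarrow> real) \<Rightarrow> (bool \<Rightarrow> nat) \<Rightarrow> (bool \<Rightarrow> nat) \<Rightarrow> (bool \<Rightarrow> nat) \<Rightarrow> real" where
  "W P f g h = (\<Sum>a\<in>UNIV. \<Sum>b\<in>UNIV. \<Sum>c\<in>UNIV. if f a = g b \<and> g b = h c then P (f a) a b c else 0)"

lemma win_W:
  assumes "\<forall>a. f a < d"
  shows "win_prob d P f g h = W P f g h"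
  unfolding win_prob_def W_def
  apply (simp only: UNIV_bool)
  apply (simp add: sum.distrib inner_L assms)
  done

lemma W_const:
  assumes nn: "\<forall>x a b c. 0 \<le> P x a b c"
    and st: "\<forall>a b c. f a = g b \<and> g b = h c \<longrightarrow> f a = s"
  shows "W P f g h \<le> marg_X P s"
  unfolding W_def marg_X_def
  apply (intro sum_mono)
  using nn st by auto

lemma W_inj:
  assumes nn: "\<forall>x a b c. 0 \<le> P x a b c"
    and fi: "f False \<noteq> f True" and gi: "g False \<noteq> g True" and hi: "h False \<noteq> h True"
    and H1: "P (f False) False False False + P (f True) True True True \<le> M"
    and H2: "P (f True) True False False + P (f False) False True True \<le> M"
    and H3: "P (f False) False True False + P (f True) True False True \<le> M"
    and H4: "P (f False) False False True + P (f True) True True False \<le> M"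
    and H1': "P (f True) False False False + P (f False) True True True \<le> M"
    and H2': "P (f False) True False False + P (f True) False True True \<le> M"
    and H3': "P (f True) False True False + P (f False) True False True \<le> M"
    and H4': "P (f True) False False True + P (f False) True True False \<le> M"
  shows "W P f g h \<le> M"
proof -
  have n: "\<And>x a b c. 0 \<le> P x a b c" using nn by auto
  note nx = n[of "f False" False False False] n[of "f False" False False True] n[of "f False" False True False] n[of "f False" False True True] n[of "f False" True False False] n[of "f False" True False True] n[of "f False" True True False] n[of "f False" True True True] n[of "f True" False False False] n[of "f True" False False True] n[of "f True" False True False] n[of "f True" False True True] n[of "f True" True False False] n[of "f True" True False True] n[of "f True" True True False] n[of "f True" True True True]
  show ?thesis
  unfolding W_def using fi gi hi H1 H2 H3 H4 H1' H2' H3' H4' nx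
  apply (simp add: UNIV_bool split del: if_split)
  apply (smt (verit))
  done
qed


lemma SF_finite: "finite (strat_funs d)"
proof -
  have "strat_funs d \<subseteq> (\<lambda>p a. if a then fst p else snd p) ` ({..<d} \<times> {..<d})"
  proof
    fix f assume "f \<in> strat_funs d"
    then have "f = (\<lambda>a. if a then fst (f True, f False) else snd (f True, f False))"
         "(f True, f False) \<in> {..<d} \<times> {..<d}"
      by (auto simp: strat_funs_def)
    then show "f \<in> (\<lambda>p a. if a then fst p else snd p) ` ({..<d} \<times> {..<d})" by blast
  qed
  then show ?thesis by (rule finite_subset) auto
qed

theorem mainTheorem8:
  fixes d :: nat and P :: "nat \<Rightarrow> bool \<Rightarrow> bool \<Rightarrow> bool \<Rightarrow> real"
  assumes "d \<ge> 2" and "is_distr d P"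
  shows "omega_c d P =
    Max {Max {marg_X P s,
              P s False False False + P t True True True,
              P s True False False + P t False True True,
              P s False True False + P t True False True,
              P s False False True + P t True True False} | s t.
         s < d \<and> t < d \<and> s \<noteq> t}"
proof -
  define T where "T s t = Max {marg_X P s,
              P s False False False + P t True True True,
              P s True False False + P t False True True,
              P s False True False + P t True False True,
              P s False False True + P t True True False}" for s t
  define R where "R = {T s t | s t. s < d \<and> t < d \<and> s \<noteq> t}"
  define M where "M = Max R"
  have nn: "\<forall>x a b c. 0 \<le> P x a b c" using assms(2) by (simp add: is_distr_def)
  have Rfin: "finite R"
  proof -
    have "R \<subseteq> {T s t | s t. s \<in> {..<d} \<and> t \<in> {..<d}}" unfolding R_def by auto
    moreover have "finite {T s t | s t. s \<in> {..<d} \<and> t \<in> {..<d}}"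
      by (rule finite_image_set2) auto
    ultimately show ?thesis by (rule finite_subset)
  qed
  have Rne: "R \<noteq> {}"
  proof -
    have "T 0 1 \<in> R" unfolding R_def using assms(1) by force
    then show ?thesis by blast
  qed
  have TM: "T s t \<le> M" if "s < d" "t < d" "s \<noteq> t" for s t
    unfolding M_def using Rfin that by (intro Max_ge) (auto simp: R_def)
  have Tge: "marg_X P s \<le> T s t"
     "P s False False False + P t True True True \<le> T s t"
     "P s True False False + P t False True True \<le> T s t"
     "P s False True False + P t True False True \<le> T s t"
     "P s False False True + P t True True False \<le> T s t" for s t
    unfolding T_def by (intro Max_ge; simp)+
  have HM: "marg_X P s \<le> M" if "s < d" for s
  proof -
    define t where "t = (if s = 0 then 1 else (0::nat))"
    have "t < d" "s \<noteq> t" using assms(1) by (auto simp: t_def)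
    then show ?thesis using TM[of s t] Tge(1)[of s t] that by linarith
  qed
  have H: "P s False False False + P t True True True \<le> M"
     "P s True False False + P t False True True \<le> M"
     "P s False True False + P t True False True \<le> M"
     "P s False False True + P t True True False \<le> M"
    if "s < d" "t < d" "s \<noteq> t" for s t
    using TM[OF that] Tge[of s t] by linarith+
  define OS where "OS = {win_prob d P f g h | f g h.
      f \<in> strat_funs d \<and> g \<in> strat_funs d \<and> h \<in> strat_funs d}"
  have Ofin: "finite OS"
  proof -
    have "OS \<subseteq> (\<lambda>(f,g,h). win_prob d P f g h) ` (strat_funs d \<times> strat_funs d \<times> strat_funs d)"
      unfolding OS_def by (auto intro!: image_eqI[where x="(f,g,h)" for f g h])
    then show ?thesis using SF_finite by (meson finite_SigmaI finite_imageI finite_subset)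
  qed
  have upper: "w \<le> M" if "w \<in> OS" for w
  proof -
    obtain f g h where w: "w = win_prob d P f g h" and fs: "\<forall>a. f a < d" "\<forall>a. g a < d" "\<forall>a. h a < d"
      using \<open>w \<in> OS\<close> unfolding OS_def strat_funs_def by blast
    have wW: "w = W P f g h" using w win_W fs(1) by simp
    show ?thesis
    proof (cases "f False = f True")
      case True
      have "W P f g h \<le> marg_X P (f False)"
        by (rule W_const[OF nn]) (metis True)
      then show ?thesis using HM fs wW by (metis order_trans)
    next
      case fF: False
      show ?thesis
      proof (cases "g False = g True")
        case True
        have "W P f g h \<le> marg_X P (g False)"
          by (rule W_const[OF nn]) (metis True)
        then show ?thesis using HM fs wW by (metis order_trans)
      next
        case gF: False
        show ?thesis
        proof (cases "h False = h True")
          case True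
          have "W P f g h \<le> marg_X P (h False)"
            by (rule W_const[OF nn]) (metis True)
          then show ?thesis using HM fs wW by (metis order_trans)
        next
          case hF: False
          have a: "f False < d" "f True < d" using fs by auto
          show ?thesis unfolding wW
            by (rule W_inj[OF nn fF gF hF H(1)[OF a fF] H(2)[OF a(2,1)] H(3)[OF a fF] H(4)[OF a fF]
                 H(1)[OF a(2,1)] H(2)[OF a fF] H(3)[OF a(2,1)] H(4)[OF a(2,1)]]) (use fF in auto)
        qed
      qed
    qed
  qed
  have MinO: "M \<in> OS"
  proof -
    have "M \<in> R" unfolding M_def using Rfin Rne by (rule Max_in)
    then obtain s t where st: "s < d" "t < d" "s \<noteq> t" "M = T s t" unfolding R_def by blast
    have "T s t \<in> {marg_X P s,
              P s False False False + P t True True True,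
              P s True False False + P t False True True,
              P s False True False + P t True False True,
              P s False False True + P t True True False}"
      unfolding T_def by (rule Max_in) auto
    moreover have ins: "win_prob d P f g h \<in> OS" if "\<forall>a. f a < d" "\<forall>a. g a < d" "\<forall>a. h a < d" for f g h
      unfolding OS_def strat_funs_def using that by blast
    define u where "u = (\<lambda>(x::nat) (y::nat) a::bool. if a then y else x)"
    have uu: "\<forall>a. u s t a < d" "\<forall>a. u t s a < d" "\<forall>a. (\<lambda>_. s) a < d"
      using st by (auto simp: u_def)
    have "marg_X P s \<in> OS"
      using ins[OF uu(3) uu(3) uu(3)] win_W[OF uu(3)] by (simp add: W_def marg_X_def)
    moreover have "P s False False False + P t True True True \<in> OS"
      using ins[OF uu(1) uu(1) uu(1)] win_W[OF uu(1)] st by (simp add: W_def UNIV_bool u_def add.commute)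
    moreover have "P s True False False + P t False True True \<in> OS"
      using ins[OF uu(2) uu(1) uu(1)] win_W[OF uu(2)] st by (simp add: W_def UNIV_bool u_def add.commute)
    moreover have "P s False True False + P t True False True \<in> OS"
      using ins[OF uu(1) uu(2) uu(1)] win_W[OF uu(1)] st by (simp add: W_def UNIV_bool u_def add.commute)
    moreover have "P s False False True + P t True True False \<in> OS"
      using ins[OF uu(1) uu(1) uu(2)] win_W[OF uu(1)] st by (simp add: W_def UNIV_bool u_def add.commute)
    ultimately show ?thesis using st(4) by auto
  qed
  have "omega_c d P = M"
    unfolding omega_c_def OS_def[symmetric]
    by (rule Max_eqI[OF Ofin upper MinO])
  then show ?thesis unfolding M_def R_def T_def .
qed

end
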